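(* Fix $\mathtt d\ge1$ and $\mathtt L\in\mathbb N$. There are infinitely many $\mathtt L$-generic sets. More precisely, for $R\ge1$ let $B_R$ be the set of all ordered $\mathtt d$-tuples of integers $\mathcal S=(\mathtt m_1<\dots<\mathtt m_{\mathtt d})$ with $\max_i|\mathtt m_i|\le R$, and let $G_R\subseteq B_R$ be the subset of those which are $\mathtt L$-generic. Then $\lim_{R\to\infty}|G_R|/|B_R|=1$.
   Context: For integers $\mathtt m_1<\dots<\mathtt m_{\mathtt d}$ let $\mathcal S_{0n}=\{(\mathtt m_i,n):1\le i\le\mathtt d\}$ for $n\in\mathbb Z$; for $1\le i<j\le\mathtt d$ let $\mathscr C^\pm_{i,j}=\{(m,n)\in\mathbb Z^2:(m-\mathtt m_i)(m-\mathtt m_j)+n^2=0,\ \pm n>0\}$, $\mathscr C_{i,j}=\mathscr C^+_{i,j}\cup\mathscr C^-_{i,j}$, $\mathscr S=\bigcup_{n\ne0}\mathcal S_{0n}$, $\mathscr C=\bigcup_{i<j}\mathscr C_{i,j}$. The tuple is generic if $\mathscr S\cap\mathscr C=\emptyset$ and $\mathscr C_{i,j}\cap\mathscr C_{i',j'}=\emptyset$ for all $\{i,j\}\ne\{i',j'\}$; it is $\mathtt L$-generic if it is generic and $\sum_i\ell_i\mathtt m_i\ne0$ for all $\ell\in\mathbb Z^{\mathtt d}$ with $0<\sum_i|\ell_i|\le\mathtt L$. *)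

theory Defs
  imports "HOL-Analysis.Analysis"
begin

text \<open>A tuple (m_1 < ... < m_d) is represented as the list ms with m_(i+1) = ms ! i.\<close>

definition S0 :: "int list \<Rightarrow> int \<Rightarrow> (int \<times> int) set" where
  "S0 ms n = {(ms ! i, n) | i. i < length ms}"

definition Cplus :: "int list \<Rightarrow> nat \<Rightarrow> nat \<Rightarrow> (int \<times> int) set" where
  "Cplus ms i j = {(m, n). (m - ms ! i) * (m - ms ! j) + n^2 = 0 \<and> n > 0}"

definition Cminus :: "int list \<Rightarrow> nat \<Rightarrow> nat \<Rightarrow> (int \<times> int) set" where
  "Cminus ms i j = {(m, n). (m - ms ! i) * (m - ms ! j) + n^2 = 0 \<and> - n > 0}"

definition Cij :: "int list \<Rightarrow> nat \<Rightarrow> nat \<Rightarrow> (int \<times> int) set" where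
  "Cij ms i j = Cplus ms i j \<union> Cminus ms i j"

definition Sset :: "int list \<Rightarrow> (int \<times> int) set" where
  "Sset ms = (\<Union>n \<in> {n. n \<noteq> 0}. S0 ms n)"

definition Cset :: "int list \<Rightarrow> (int \<times> int) set" where
  "Cset ms = (\<Union>(i, j) \<in> {(i, j). i < j \<and> j < length ms}. Cij ms i j)"

definition generic :: "int list \<Rightarrow> bool" where
  "generic ms \<longleftrightarrow> Sset ms \<inter> Cset ms = {} \<and>
     (\<forall>i j i' j'. i < j \<and> j < length ms \<and> i' < j' \<and> j' < length ms \<and> {i, j} \<noteq> {i', j'}
        \<longrightarrow> Cij ms i j \<inter> Cij ms i' j' = {})"

definition L_generic :: "nat \<Rightarrow> int list \<Rightarrow> bool" where
  "L_generic L ms \<longleftrightarrow> generic ms \<and>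
     (\<forall>l :: nat \<Rightarrow> int. 0 < (\<Sum>i<length ms. \<bar>l i\<bar>) \<and> (\<Sum>i<length ms. \<bar>l i\<bar>) \<le> int L
        \<longrightarrow> (\<Sum>i<length ms. l i * ms ! i) \<noteq> 0)"

definition Bset :: "nat \<Rightarrow> real \<Rightarrow> int list set" where
  "Bset d R = {ms. length ms = d \<and> sorted_wrt (<) ms \<and> (\<forall>x \<in> set ms. real_of_int \<bar>x\<bar> \<le> R)}"

definition Gset :: "nat \<Rightarrow> nat \<Rightarrow> real \<Rightarrow> int list set" where
  "Gset d L R = {ms \<in> Bset d R. L_generic L ms}"

end

theory Submission
  imports Defs "HOL-Real_Asymp.Real_Asymp"
begin


lemma dvd_sq_diff:
  fixes x a b :: int
  assumes "x dvd a^2" "x dvd b^2"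
  shows "x dvd (b - a)^2"
proof -
  have "x^2 dvd (a*b)^2" using assms by (metis mult_dvd_mono power_mult_distrib power2_eq_square power_mult_distrib)
  hence "x dvd a*b" using pow_divides_pow_iff[of 2 x "a*b"] by simp
  hence "x dvd a^2 - 2*(a*b) + b^2" using assms by simp
  moreover have "(b-a)^2 = a^2 - 2*(a*b) + b^2" by (simp add: power2_eq_square algebra_simps)
  ultimately show ?thesis by simp
qed

lemma card_sep_le:
  fixes T :: "int set" and s :: real and M :: int
  assumes "T \<subseteq> {1..M}" "s \<ge> 1" "M \<ge> 0" "\<And>a b. a \<in> T \<Longrightarrow> b \<in> T \<Longrightarrow> a < b \<Longrightarrow> s \<le> b - a"
  shows "real (card T) \<le> M / s + 1"
proof -
  define f where "f t = \<lfloor>(t - 1) / s\<rfloor>" for t :: int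
  have inj: "inj_on f T"
  proof (rule inj_onI, rule ccontr)
    fix a b assume ab: "a \<in> T" "b \<in> T" "f a = f b" "a \<noteq> b"
    { fix a b assume ab: "a \<in> T" "b \<in> T" "f a = f b" "a < b"
      have "s \<le> b - a" using assms(4) ab by auto
      hence "(b-1)/s - (a-1)/s \<ge> 1" using assms(2) by (simp add: diff_divide_distrib[symmetric] le_divide_eq)
      hence "f a < f b" unfolding f_def by linarith
      hence False using ab by simp }
    thus False using ab by (metis linorder_neqE_linordered_idom)
  qed
  have sub: "f ` T \<subseteq> {0..\<lfloor>(M-1)/s\<rfloor>}"
  proof
    fix y assume "y \<in> f ` T" then obtain t where t: "t \<in> T" "y = f t" by auto
    have "1 \<le> t" "t \<le> M" using t assms(1) by auto
    hence "0 \<le> (t-1)/s" "(t-1)/s \<le> (M-1)/s" using assms(2) by (auto simp: divide_right_mono)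
    thus "y \<in> {0..\<lfloor>(M-1)/s\<rfloor>}" using t unfolding f_def by (auto intro: floor_mono)
  qed
  have "card T = card (f ` T)" using inj by (simp add: card_image)
  also have "\<dots> \<le> card {0..\<lfloor>(M-1)/s\<rfloor>}" using sub by (intro card_mono) auto
  finally have "real (card T) \<le> real (card {0..\<lfloor>(M-1)/s\<rfloor>})" by simp
  also have "\<dots> \<le> (M-1)/s + 1"
  proof (cases "M \<ge> 1")
    case True 
    hence "\<lfloor>(M-1)/s\<rfloor> \<ge> 0" using assms(2) by simp
    thus ?thesis by (simp; linarith)
  next
    case False hence "M = 0" using assms(3) by simp
    thus ?thesis using assms(2) by simp
  qed
  also have "\<dots> \<le> M/s + 1" using assms(2) by (simp add: divide_right_mono)
  finally show ?thesis .
qed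

lemma count_dvd_sq:
  fixes x M :: int
  assumes "x \<ge> 1" "M \<ge> 0"
  shows "real (card {n \<in> {1..M}. x dvd n^2}) \<le> M / sqrt x + 1"
proof (rule card_sep_le)
  show "sqrt (real_of_int x) \<ge> 1" using assms by simp
  fix a b assume a: "a \<in> {n \<in> {1..M}. x dvd n^2}" and b: "b \<in> {n \<in> {1..M}. x dvd n^2}" and ab: "a < b"
  have "x dvd (b-a)^2" using a b dvd_sq_diff by auto
  hence "x \<le> (b-a)^2" using ab by (intro zdvd_imp_le) auto
  hence "real_of_int x \<le> (real_of_int (b-a))^2" by (metis of_int_le_iff of_int_power)
  hence "sqrt x \<le> \<bar>real_of_int (b-a)\<bar>" using real_le_rsqrt real_sqrt_le_mono by (metis real_sqrt_abs)
  thus "sqrt x \<le> real_of_int b - real_of_int a" using ab by simp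
qed (use assms in auto)

lemma sum_inv_sqrt: "(\<Sum>x=1..n. 1 / sqrt (real x)) \<le> 2 * sqrt (real n)"
proof (induction n)
  case 0 thus ?case by simp
next
  case (Suc n)
  have key: "1 / sqrt (real (Suc n)) \<le> 2 * sqrt (real (Suc n)) - 2 * sqrt (real n)"
  proof -
    have "2 * sqrt (real n) * sqrt (real (Suc n)) \<le> 2 * real n + 1"
    proof -
      have "sqrt (real n) * sqrt (real (Suc n)) = sqrt (real n * (real n + 1))" by (simp add: real_sqrt_mult)
      also have "\<dots> \<le> sqrt ((real n + 1/2)^2)" by (intro real_sqrt_le_mono) (simp add: power2_eq_square algebra_simps)
      also have "\<dots> = real n + 1/2" by simp
      finally show ?thesis by simp
    qed
    moreover have "sqrt (real (Suc n)) * sqrt (real (Suc n)) = real n + 1" by simp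
    ultimately have "1 \<le> 2 * sqrt (real (Suc n)) * sqrt (real (Suc n)) - 2 * sqrt (real n) * sqrt (real (Suc n))"
      by linarith
    thus ?thesis by (simp add: field_simps)
  qed
  show ?case using Suc key by simp
qed

definition Wp :: "nat \<Rightarrow> (int \<times> int) set" where
  "Wp M = {(x,y). 1 \<le> x \<and> x \<le> int M \<and> 1 \<le> y \<and> y \<le> int M \<and> (\<exists>n. x*y = n^2)}"

definition Wset :: "nat \<Rightarrow> (int \<times> int) set" where
  "Wset M = {(u,v). abs u \<le> int M \<and> abs v \<le> int M \<and> (\<exists>n. n \<noteq> 0 \<and> u * v = -(n^2))}"

lemma card_Wp: "real (card (Wp M)) \<le> M + 2 * M * sqrt M"
proof -
  define Sg where "Sg = (SIGMA x:{1..M}. {n \<in> {1..int M}. int x dvd n^2})"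
  have fin: "finite Sg" unfolding Sg_def by (rule finite_SigmaI) (auto intro: finite_subset[of _ "{1..int M}"])
  have sub: "Wp M \<subseteq> (\<lambda>(x,n). (int x, n^2 div int x)) ` Sg"
  proof
    fix p assume "p \<in> Wp M"
    then obtain x y n where p: "p = (x,y)" "1 \<le> x" "x \<le> int M" "1 \<le> y" "y \<le> int M" "x*y = n^2"
      unfolding Wp_def by auto
    have "x*y \<le> int M * int M" using p by (intro mult_mono) auto
    hence "\<bar>n\<bar>^2 \<le> (int M)^2" using p by (simp add: power2_eq_square)
    hence n1: "\<bar>n\<bar> \<le> int M" by (metis abs_ge_zero of_nat_0_le_iff power2_le_imp_le)
    have "x * y > 0" using p(2,4) by (simp add: mult_pos_pos)
    hence "n \<noteq> 0" using p(6) by (intro notI) simp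
    hence n2: "\<bar>n\<bar> \<ge> 1" by simp
    have nn: "\<bar>n\<bar>^2 = x * y" using p by simp
    have d: "x dvd \<bar>n\<bar>^2" unfolding nn by simp
    have "y = (x * y) div x" using p(2) by simp
    hence "y = \<bar>n\<bar>^2 div x" by (simp only: nn)
    moreover have mem: "(nat x, \<bar>n\<bar>) \<in> Sg" unfolding Sg_def using p n1 n2 d by auto
    ultimately have "p = (\<lambda>(x,n). (int x, n^2 div int x)) (nat x, \<bar>n\<bar>)" using p(1,2) by simp
    thus "p \<in> (\<lambda>(x,n). (int x, n^2 div int x)) ` Sg" using mem by (rule image_eqI)
  qed
  have "card (Wp M) \<le> card Sg" by (rule order_trans[OF card_mono[OF finite_imageI[OF fin] sub] card_image_le[OF fin]])
  also have "card Sg = (\<Sum>x\<in>{1..M}. card {n \<in> {1..int M}. int x dvd n^2})"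
    unfolding Sg_def by (rule card_SigmaI) (auto intro: finite_subset[of _ "{1..int M}"])
  finally have "real (card (Wp M)) \<le> real (\<Sum>x\<in>{1..M}. card {n \<in> {1..int M}. int x dvd n^2})"
    by (simp only: of_nat_le_iff)
  also have "\<dots> = (\<Sum>x\<in>{1..M}. real (card {n \<in> {1..int M}. int x dvd n^2}))"
    by (rule of_nat_sum)
  also have "\<dots> \<le> (\<Sum>x\<in>{1..M}. M * (1 / sqrt (real x)) + 1)"
  proof (rule sum_mono)
    fix x assume "x \<in> {1..M}"
    thus "real (card {n \<in> {1..int M}. int x dvd n^2}) \<le> M * (1 / sqrt (real x)) + 1"
      using count_dvd_sq[of "int x" "int M"] by simp
  qed
  also have "\<dots> = M * (\<Sum>x\<in>{1..M}. 1 / sqrt (real x)) + M"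
    by (simp add: sum.distrib sum_distrib_left)
  also have "\<dots> \<le> M * (2 * sqrt M) + M"
    using sum_inv_sqrt[of M] by (simp add: mult_left_mono)
  finally show ?thesis by simp
qed

lemma card_Wset: "real (card (Wset M)) \<le> 2 * (M + 2 * M * sqrt M)"
proof -
  have sub: "Wset M \<subseteq> (\<lambda>(x,y). (x,-y)) ` Wp M \<union> (\<lambda>(x,y). (-x,y)) ` Wp M"
  proof
    fix p assume "p \<in> Wset M"
    then obtain u v n where p: "p = (u,v)" "\<bar>u\<bar> \<le> int M" "\<bar>v\<bar> \<le> int M" "n \<noteq> 0" "u * v = -(n^2)"
      unfolding Wset_def by auto
    have "u * v < 0" using p by simp
    hence "(u > 0 \<and> v < 0) \<or> (u < 0 \<and> v > 0)" by (simp add: mult_less_0_iff)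
    thus "p \<in> (\<lambda>(x,y). (x,-y)) ` Wp M \<union> (\<lambda>(x,y). (-x,y)) ` Wp M"
    proof
      assume h: "u > 0 \<and> v < 0"
      have "(u,-v) \<in> Wp M" unfolding Wp_def using p h by auto
      thus ?thesis using p by (auto intro: image_eqI[of _ _ "(u,-v)"])
    next
      assume h: "u < 0 \<and> v > 0"
      have "(-u,v) \<in> Wp M" unfolding Wp_def using p h by auto
      thus ?thesis using p by (auto intro: image_eqI[of _ _ "(-u,v)"])
    qed
  qed
  have finWp: "finite (Wp M)"
    by (rule finite_subset[of _ "{1..int M} \<times> {1..int M}"]) (auto simp: Wp_def)
  have "card (Wset M) \<le> card ((\<lambda>(x,y). (x,-y)) ` Wp M \<union> (\<lambda>(x,y). (-x,y)) ` Wp M)"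
    using sub finWp by (intro card_mono) auto
  also have "\<dots> \<le> card ((\<lambda>(x,y). (x,-y)) ` Wp M) + card ((\<lambda>(x,y). (-x,y)) ` Wp M)"
    by (rule card_Un_le)
  also have "\<dots> \<le> card (Wp M) + card (Wp M)" by (intro add_mono card_image_le finWp)
  finally have "real (card (Wset M)) \<le> 2 * real (card (Wp M))" by simp
  thus ?thesis using card_Wp[of M] by simp
qed



lemma card_recon:
  fixes X :: "'a list set" and D :: "'p set"
  assumes fD: "finite D" and fA: "finite A" and J: "J \<subseteq> {..<d}"
  and H: "\<And>ms. ms \<in> X \<Longrightarrow> length ms = d \<and> set ms \<subseteq> A \<and>
           (\<exists>p\<in>D. \<forall>i\<in>J. ms ! i = g p (restrict (nth ms) ({..<d} - J)) i)"
  shows "card X \<le> card D * card A ^ (d - card J)"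
proof -
  define h where "h = (\<lambda>(p, r). map (\<lambda>i. if i \<in> J then g p r i else r i) [0..<d])"
  define PE where "PE = PiE ({..<d} - J) (\<lambda>_. A)"
  have finPE: "finite PE" unfolding PE_def using fA by (intro finite_PiE) auto
  have sub: "X \<subseteq> h ` (D \<times> PE)"
  proof
    fix ms assume ms: "ms \<in> X"
    from H[OF ms] obtain p where l: "length ms = d" and s: "set ms \<subseteq> A" and p: "p \<in> D"
      and e: "\<forall>i\<in>J. ms ! i = g p (restrict (nth ms) ({..<d} - J)) i" by blast
    define r where "r = restrict (nth ms) ({..<d} - J)"
    have r: "r \<in> PE" unfolding PE_def r_def using s l by (auto simp: PiE_def)
    have "h (p, r) = ms"
      unfolding h_def using l e r_def by (intro nth_equalityI) auto
    thus "ms \<in> h ` (D \<times> PE)" using p r by force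
  qed
  have "card X \<le> card (h ` (D \<times> PE))" using sub fD finPE by (intro card_mono) auto
  also have "\<dots> \<le> card (D \<times> PE)" by (rule card_image_le) (use fD finPE in auto)
  also have "\<dots> = card D * card PE" by (rule card_cartesian_product)
  also have "card PE = card A ^ card ({..<d} - J)" unfolding PE_def by (simp add: card_PiE)
  also have "card ({..<d} - J) = d - card J" using J by (simp add: card_Diff_subset finite_subset)
  finally show ?thesis .
qed

definition LA :: "int \<Rightarrow> nat \<Rightarrow> int list set" where
  "LA N d = {ms. set ms \<subseteq> {-N..N} \<and> length ms = d}"

definition E1 :: "int \<Rightarrow> nat \<Rightarrow> (nat \<Rightarrow> int) \<Rightarrow> int list set" where
  "E1 N d l = {ms \<in> LA N d. (\<Sum>i<d. l i * ms ! i) = 0}"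

lemma card_E1:
  assumes "k < d" "l k \<noteq> 0"
  shows "card (E1 N d l) \<le> card {-N..N} ^ (d - 1)"
proof -
  have "card (E1 N d l) \<le> card {()} * card {-N..N} ^ (d - card {k})"
  proof (rule card_recon[where g = "\<lambda>_ r _. - (\<Sum>j\<in>{..<d} - {k}. l j * r j) div l k"])
    fix ms assume ms: "ms \<in> E1 N d l"
    hence l: "length ms = d" "set ms \<subseteq> {-N..N}" and s: "(\<Sum>i<d. l i * ms ! i) = 0"
      unfolding E1_def LA_def by auto
    have "(\<Sum>i<d. l i * ms ! i) = l k * ms ! k + (\<Sum>j\<in>{..<d} - {k}. l j * ms ! j)"
      using assms(1) by (simp add: sum.remove)
    also have "(\<Sum>j\<in>{..<d} - {k}. l j * ms ! j) = (\<Sum>j\<in>{..<d} - {k}. l j * restrict (nth ms) ({..<d} - {k}) j)"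
      by (intro sum.cong) auto
    finally have "l k * ms ! k = - (\<Sum>j\<in>{..<d} - {k}. l j * restrict (nth ms) ({..<d} - {k}) j)"
      using s by linarith
    hence "ms ! k = - (\<Sum>j\<in>{..<d} - {k}. l j * restrict (nth ms) ({..<d} - {k}) j) div l k"
      using assms(2) by (metis nonzero_mult_div_cancel_left)
    thus "length ms = d \<and> set ms \<subseteq> {-N..N} \<and> (\<exists>p\<in>{()}. \<forall>i\<in>{k}. ms ! i =
        (\<lambda>_ r _. - (\<Sum>j\<in>{..<d} - {k}. l j * r j) div l k) p (restrict (nth ms) ({..<d} - {k})) i)"
      using l by auto
  qed (use assms in auto)
  thus ?thesis by simp
qed

definition E2 :: "int \<Rightarrow> nat \<Rightarrow> nat \<Rightarrow> nat \<Rightarrow> nat \<Rightarrow> int list set" where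
  "E2 N d i j k = {ms \<in> LA N d. \<exists>n. n \<noteq> 0 \<and> (ms ! k - ms ! i) * (ms ! k - ms ! j) = -(n^2)}"

lemma card_E2:
  assumes "i < d" "j < d" "k < d" "i \<noteq> j" "i \<noteq> k" "j \<noteq> k" "N \<ge> 0"
  shows "card (E2 N d i j k) \<le> card ({-N..N} \<times> Wset (nat (2*N))) * card {-N..N} ^ (d - 3)"
proof -
  have c3: "card {i,j,k} = 3" using assms by auto
  have "card (E2 N d i j k) \<le> card ({-N..N} \<times> Wset (nat (2*N))) * card {-N..N} ^ (d - card {i,j,k})"
  proof (rule card_recon[where g = "\<lambda>(c,(u,v)) r t. if t = k then c else if t = i then c - u else c - v"])
    show "finite ({-N..N} \<times> Wset (nat (2*N)))"
      by (intro finite_cartesian_product finite_atLeastAtMost_int,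
          rule finite_subset[of _ "{-(2*N)..2*N} \<times> {-(2*N)..2*N}"]) (auto simp: Wset_def)
    fix ms assume ms: "ms \<in> E2 N d i j k"
    then obtain n where l: "length ms = d" "set ms \<subseteq> {-N..N}" and n: "n \<noteq> 0"
        "(ms ! k - ms ! i) * (ms ! k - ms ! j) = -(n^2)"
      unfolding E2_def LA_def by auto
    have b: "ms ! t \<in> {-N..N}" if "t < d" for t using l that by (metis nth_mem subsetD)
    have W: "(ms ! k - ms ! i, ms ! k - ms ! j) \<in> Wset (nat (2*N))"
      unfolding Wset_def using n b[OF assms(1)] b[OF assms(2)] b[OF assms(3)] assms(7) by auto
    show "length ms = d \<and> set ms \<subseteq> {-N..N} \<and> (\<exists>p\<in>{-N..N} \<times> Wset (nat (2*N)). \<forall>t\<in>{i,j,k}. ms ! t =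
        (\<lambda>(c,(u,v)) r t. if t = k then c else if t = i then c - u else c - v) p (restrict (nth ms) ({..<d} - {i,j,k})) t)"
      using l W b[OF assms(3)] assms
      by (intro conjI bexI[of _ "(ms ! k, (ms ! k - ms ! i, ms ! k - ms ! j))"]) auto
  qed (use assms in auto)
  thus ?thesis using c3 by simp
qed

definition E3 :: "int \<Rightarrow> nat \<Rightarrow> nat \<Rightarrow> nat \<Rightarrow> nat \<Rightarrow> nat \<Rightarrow> int list set" where
  "E3 N d i j i' j' = {ms \<in> LA N d. \<exists>m n. n \<noteq> 0 \<and> (m - ms ! i) * (m - ms ! j) = -(n^2)
       \<and> (m - ms ! i') * (m - ms ! j') = -(n^2)}"

lemma between_bound:
  fixes m a b :: int
  assumes "(m - a) * (m - b) < 0"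
  shows "\<bar>m - a\<bar> \<le> \<bar>b - a\<bar> \<and> \<bar>m - b\<bar> \<le> \<bar>b - a\<bar>"
  using assms by (auto simp: mult_less_0_iff)

lemma card_E3:
  assumes "i < d" "j < d" "i' < d" "j' < d" "distinct [i,j,i',j']" "N \<ge> 0"
  shows "card (E3 N d i j i' j') \<le> card ({-N..N} \<times> Wset (nat (2*N)) \<times> {-N..N}) * card {-N..N} ^ (d - 4)"
proof -
  have c4: "card {i,j,i',j'} = 4" using assms by auto
  have "card (E3 N d i j i' j') \<le> card ({-N..N} \<times> Wset (nat (2*N)) \<times> {-N..N}) * card {-N..N} ^ (d - card {i,j,i',j'})"
  proof (rule card_recon[where g = "\<lambda>(a,(u,v),c) r t. if t = i then a else if t = j then a + u - v
        else if t = i' then c else (a + u) - (u * v) div (a + u - c)"])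
    show "finite ({-N..N} \<times> Wset (nat (2*N)) \<times> {-N..N})"
      by (intro finite_cartesian_product finite_atLeastAtMost_int,
          rule finite_subset[of _ "{-(2*N)..2*N} \<times> {-(2*N)..2*N}"]) (auto simp: Wset_def)
    fix ms assume ms: "ms \<in> E3 N d i j i' j'"
    then obtain m n where l: "length ms = d" "set ms \<subseteq> {-N..N}" and n: "n \<noteq> 0"
        "(m - ms ! i) * (m - ms ! j) = -(n^2)" "(m - ms ! i') * (m - ms ! j') = -(n^2)"
      unfolding E3_def LA_def by auto
    have b: "ms ! t \<in> {-N..N}" if "t < d" for t using l that by (metis nth_mem subsetD)
    have neg: "(m - ms ! i) * (m - ms ! j) < 0" using n by simp
    have W: "(m - ms ! i, m - ms ! j) \<in> Wset (nat (2*N))"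
      using between_bound[OF neg] n b[OF assms(1)] b[OF assms(2)] assms(6)
      unfolding Wset_def by auto
    have nz: "m - ms ! i' \<noteq> 0" using n by auto
    have e: "ms ! j' = m - ((m - ms ! i) * (m - ms ! j)) div (m - ms ! i')"
    proof -
      have "(m - ms ! i) * (m - ms ! j) = (m - ms ! i') * (m - ms ! j')" using n by simp
      hence "((m - ms ! i) * (m - ms ! j)) div (m - ms ! i') = m - ms ! j'" using nz by simp
      thus ?thesis by simp
    qed
    show "length ms = d \<and> set ms \<subseteq> {-N..N} \<and> (\<exists>p\<in>{-N..N} \<times> Wset (nat (2*N)) \<times> {-N..N}. \<forall>t\<in>{i,j,i',j'}. ms ! t =
        (\<lambda>(a,(u,v),c) r t. if t = i then a else if t = j then a + u - v
        else if t = i' then c else (a + u) - (u * v) div (a + u - c)) p (restrict (nth ms) ({..<d} - {i,j,i',j'})) t)"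
      using l W b[OF assms(1)] b[OF assms(3)] assms e
      by (intro conjI bexI[of _ "(ms ! i, (m - ms ! i, m - ms ! j), ms ! i')"]) auto
  qed (use assms in auto)
  thus ?thesis using c4 by simp
qed



definition K1 :: "nat \<Rightarrow> nat \<Rightarrow> (nat \<times> (nat \<Rightarrow> int)) set" where
  "K1 d L = {(k,l). k < d \<and> l \<in> PiE {..<d} (\<lambda>_. {-int L..int L}) \<and> l k \<noteq> 0}"
definition K2 :: "nat \<Rightarrow> (nat \<times> nat \<times> nat) set" where
  "K2 d = {(i,j,k). i < d \<and> j < d \<and> k < d \<and> distinct [i,j,k]}"
definition K3 :: "nat \<Rightarrow> (nat \<times> nat \<times> nat \<times> nat) set" where
  "K3 d = {(i,j,i',j'). i < d \<and> j < d \<and> i' < d \<and> j' < d \<and> distinct [i,j,i',j']}"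

definition Bad :: "int \<Rightarrow> nat \<Rightarrow> nat \<Rightarrow> int list set" where
  "Bad N d L = (\<Union>(k,l)\<in>K1 d L. E1 N d l) \<union> (\<Union>(i,j,k)\<in>K2 d. E2 N d i j k)
      \<union> (\<Union>(i,j,i',j')\<in>K3 d. E3 N d i j i' j')"

lemma Bset_eq:
  assumes "R \<ge> 0"
  shows "Bset d R = {ms \<in> LA \<lfloor>R\<rfloor> d. sorted_wrt (<) ms}"
proof -
  have "(\<forall>x\<in>set ms. real_of_int \<bar>x\<bar> \<le> R) \<longleftrightarrow> set ms \<subseteq> {-\<lfloor>R\<rfloor>..\<lfloor>R\<rfloor>}" for ms
  proof -
    have "real_of_int \<bar>x\<bar> \<le> R \<longleftrightarrow> x \<in> {-\<lfloor>R\<rfloor>..\<lfloor>R\<rfloor>}" for x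
      by (simp add: le_floor_iff[symmetric] abs_le_iff) linarith
    thus ?thesis by auto
  qed
  thus ?thesis unfolding Bset_def LA_def by auto
qed

lemma shared_contra:
  fixes m a b c n :: int
  assumes "(m - a) * (m - b) = -(n^2)" "(m - a) * (m - c) = -(n^2)" "n \<noteq> 0"
  shows "b = c"
proof -
  have "m - a \<noteq> 0" using assms by auto
  moreover have "(m - a) * (m - b) = (m - a) * (m - c)" using assms by simp
  ultimately show ?thesis by simp
qed

lemma bad_incl:
  assumes "R \<ge> 0" "ms \<in> Bset d R" "\<not> L_generic L ms"
  shows "ms \<in> Bad \<lfloor>R\<rfloor> d L"
proof -
  define N where "N = \<lfloor>R\<rfloor>"
  have ms: "ms \<in> LA N d" "sorted_wrt (<) ms" using assms(1,2) Bset_eq unfolding N_def by auto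
  have len: "length ms = d" using ms unfolding LA_def by auto
  have dist: "distinct ms" using ms(2) strict_sorted_iff by auto
  have inj: "ms ! a = ms ! b \<longleftrightarrow> a = b" if "a < d" "b < d" for a b
    using nth_eq_iff_index_eq[OF dist] that len by auto
  from assms(3) consider (lin) l where "0 < (\<Sum>i<d. \<bar>l i\<bar>)" "(\<Sum>i<d. \<bar>l i\<bar>) \<le> int L"
       "(\<Sum>i<d. l i * ms ! i) = 0"
    | (SC) "Sset ms \<inter> Cset ms \<noteq> {}"
    | (CC) i j i' j' where "i < j" "j < d" "i' < j'" "j' < d" "{i,j} \<noteq> {i',j'}"
         "Cij ms i j \<inter> Cij ms i' j' \<noteq> {}"
    unfolding L_generic_def generic_def len by blast
  thus ?thesis
  proof cases
    case lin
    obtain k where k: "k < d" "l k \<noteq> 0"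
    proof (rule ccontr)
      assume "\<not> thesis"
      hence "\<forall>k<d. l k = 0" using that by blast
      hence "(\<Sum>i<d. \<bar>l i\<bar>) = 0" by simp
      thus False using lin by simp
    qed
    define l' where "l' = restrict l {..<d}"
    have "\<bar>l i\<bar> \<le> int L" if "i < d" for i
    proof -
      have "\<bar>l i\<bar> \<le> (\<Sum>i<d. \<bar>l i\<bar>)" using that by (intro member_le_sum) auto
      thus ?thesis using lin by simp
    qed
    hence "l' \<in> PiE {..<d} (\<lambda>_. {-int L..int L})" unfolding l'_def by (auto simp: abs_le_iff) (metis minus_le_iff)
    hence "(k, l') \<in> K1 d L" unfolding K1_def l'_def using k by auto
    moreover have "ms \<in> E1 N d l'" unfolding E1_def l'_def using ms(1) lin(3) by simp
    ultimately show ?thesis unfolding Bad_def N_def by blast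
  next
    case SC
    then obtain x n where xn: "(x,n) \<in> Sset ms" "(x,n) \<in> Cset ms" by auto
    from xn(1) obtain k where n0: "n \<noteq> 0" and k: "k < d" "x = ms ! k"
      unfolding Sset_def S0_def len by auto
    from xn(2) obtain i j where ij: "i < j" "j < d" and "(x,n) \<in> Cij ms i j"
      unfolding Cset_def len by auto
    hence c: "(x - ms ! i) * (x - ms ! j) + n^2 = 0" unfolding Cij_def Cplus_def Cminus_def by auto
    have "k \<noteq> i" using c k n0 by auto
    moreover have "k \<noteq> j" using c k n0 by auto
    ultimately have "(i,j,k) \<in> K2 d" unfolding K2_def using ij k by auto
    moreover have "(ms ! k - ms ! i) * (ms ! k - ms ! j) = -(n^2)" using c unfolding k(2) by linarith
    hence "ms \<in> E2 N d i j k" unfolding E2_def using ms(1) n0 by blast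
    ultimately show ?thesis unfolding Bad_def N_def by blast
  next
    case CC
    then obtain x n where xn: "(x,n) \<in> Cij ms i j" "(x,n) \<in> Cij ms i' j'" by auto
    hence n0: "n \<noteq> 0" and c1: "(x - ms ! i) * (x - ms ! j) + n^2 = 0"
        and c2: "(x - ms ! i') * (x - ms ! j') + n^2 = 0"
      unfolding Cij_def Cplus_def Cminus_def by auto
    have e1: "(x - ms ! i) * (x - ms ! j) = -(n^2)" using c1 by linarith
    have e2: "(x - ms ! i') * (x - ms ! j') = -(n^2)" using c2 by linarith
    have "distinct [i,j,i',j']"
    proof (rule ccontr)
      assume nd: "\<not> distinct [i,j,i',j']"
      have e1': "(x - ms ! j) * (x - ms ! i) = -(n^2)" using e1 by (simp add: mult.commute)
      have e2': "(x - ms ! j') * (x - ms ! i') = -(n^2)" using e2 by (simp add: mult.commute)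
      from nd CC consider "i = i'" | "i = j'" | "j = i'" | "j = j'" by auto
      thus False
      proof cases
        case 1
        hence "ms ! j = ms ! j'" using shared_contra[OF e1 _ n0] e2 by simp
        thus False using CC 1 inj by auto
      next
        case 2
        hence "ms ! j = ms ! i'" using shared_contra[OF e1 _ n0] e2' by simp
        thus False using CC 2 inj by auto
      next
        case 3
        hence "ms ! i = ms ! j'" using shared_contra[OF e1' _ n0] e2 by simp
        thus False using CC 3 inj by auto
      next
        case 4
        hence "ms ! i = ms ! i'" using shared_contra[OF e1' _ n0] e2' by simp
        thus False using CC 4 inj by auto
      qed
    qed
    hence "(i,j,i',j') \<in> K3 d" unfolding K3_def using CC by auto
    moreover have "ms \<in> E3 N d i j i' j'" unfolding E3_def using ms(1) n0 e1 e2 by blast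
    ultimately show ?thesis unfolding Bad_def N_def by blast
  qed
qed



lemma finite_LA: "finite (LA N d)"
  unfolding LA_def by (rule finite_lists_length_eq) simp

lemma card_K1: "card (K1 d L) \<le> d * nat (2 * int L + 1) ^ d" "finite (K1 d L)"
proof -
  have sub: "K1 d L \<subseteq> {..<d} \<times> PiE {..<d} (\<lambda>_. {-int L..int L})" unfolding K1_def by auto
  have f: "finite ({..<d} \<times> PiE {..<d} (\<lambda>_. {-int L..int L}))" by (intro finite_cartesian_product finite_PiE) auto
  show "finite (K1 d L)" using finite_subset[OF sub f] .
  have "card (K1 d L) \<le> card ({..<d} \<times> PiE {..<d} (\<lambda>_. {-int L..int L}))" using card_mono[OF f sub] .
  also have "\<dots> = d * nat (2 * int L + 1) ^ d" by (simp add: card_cartesian_product card_PiE)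
  finally show "card (K1 d L) \<le> d * nat (2 * int L + 1) ^ d" .
qed

lemma card_K2: "card (K2 d) \<le> d ^ 3" "finite (K2 d)"
proof -
  have sub: "K2 d \<subseteq> {..<d} \<times> {..<d} \<times> {..<d}" unfolding K2_def by auto
  have f: "finite ({..<d} \<times> {..<d} \<times> {..<d})" by auto
  show "finite (K2 d)" using finite_subset[OF sub f] .
  have "card (K2 d) \<le> card ({..<d} \<times> {..<d} \<times> {..<d})" using card_mono[OF f sub] .
  also have "\<dots> = d ^ 3" by (simp add: card_cartesian_product power3_eq_cube)
  finally show "card (K2 d) \<le> d ^ 3" .
qed

lemma card_K3: "card (K3 d) \<le> d ^ 4" "finite (K3 d)"
proof -
  have sub: "K3 d \<subseteq> {..<d} \<times> {..<d} \<times> {..<d} \<times> {..<d}" unfolding K3_def by auto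
  have f: "finite ({..<d} \<times> {..<d} \<times> {..<d} \<times> {..<d})" by auto
  show "finite (K3 d)" using finite_subset[OF sub f] .
  have "card (K3 d) \<le> card ({..<d} \<times> {..<d} \<times> {..<d} \<times> {..<d})" using card_mono[OF f sub] .
  also have "\<dots> = d ^ 4" by (simp add: card_cartesian_product power4_eq_xxxx)
  finally show "card (K3 d) \<le> d ^ 4" .
qed

lemma pow_diff_real: "(P::real) \<ge> 1 \<Longrightarrow> k \<le> d \<Longrightarrow> P ^ (d - k) = P ^ d / P ^ k"
  by (simp add: power_diff)

lemma Wbound:
  assumes "N \<ge> 0"
  shows "real (card (Wset (nat (2*N)))) \<le> 6 * real_of_int (2*N+1) * sqrt (real_of_int (2*N+1))"
proof -
  define P where "P = real_of_int (2*N+1)"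
  have M: "real (nat (2*N)) \<le> P" "real (nat (2*N)) \<ge> 0" unfolding P_def using assms by auto
  have P1: "P \<ge> 1" unfolding P_def using assms by simp
  hence s1: "sqrt P \<ge> 1" by simp
  have "real (card (Wset (nat (2*N)))) \<le> 2 * (real (nat (2*N)) + 2 * real (nat (2*N)) * sqrt (real (nat (2*N))))"
    by (rule card_Wset)
  also have "\<dots> \<le> 2 * (P + 2 * P * sqrt P)"
    using M by (intro mult_left_mono add_mono mult_mono real_sqrt_le_mono) auto
  also have "\<dots> \<le> 6 * P * sqrt P" using P1 s1 mult_left_mono[of 1 "sqrt P" P] by simp
  finally show ?thesis unfolding P_def .
qed

lemma bad_bound:
  assumes "N \<ge> 0" "d \<ge> 1"
  defines "P \<equiv> real_of_int (2*N+1)"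
  shows "real (card (Bad N d L)) \<le> (real (d * nat (2 * int L + 1) ^ d) + 6 * d^3 + 6 * d^4) * (P ^ d / sqrt P)"
proof -
  have P1: "P \<ge> 1" unfolding P_def using assms by simp
  have s1: "sqrt P \<ge> 1" using P1 by simp
  have cA: "real (card {-N..N}) = P" unfolding P_def using assms by simp
  have sP: "sqrt P * sqrt P = P" using P1 by simp
  have Wb: "real (card (Wset (nat (2*N)))) \<le> 6 * P * sqrt P" using Wbound[OF assms(1)] unfolding P_def .
  define X where "X = P ^ d / sqrt P"
  have X0: "X \<ge> 0" unfolding X_def using P1 by simp
  have b1: "real (card (E1 N d l)) \<le> X" if "(k,l) \<in> K1 d L" for k l
  proof -
    have "real (card (E1 N d l)) \<le> real (card {-N..N} ^ (d - 1))"
      using card_E1[of k d l N] that unfolding K1_def by simp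
    also have "\<dots> = P ^ d / P" using cA pow_diff_real[OF P1, of 1 d] assms(2) by simp
    also have "\<dots> \<le> X" unfolding X_def using P1 s1 sP mult_left_mono[of 1 "sqrt P" "sqrt P"]
      by (intro divide_left_mono) auto
    finally show ?thesis .
  qed
  have b2: "real (card (E2 N d i j k)) \<le> 6 * X" if "(i,j,k) \<in> K2 d" for i j k
  proof -
    have d3: "3 \<le> d" using that unfolding K2_def by (auto simp: distinct_def)
    have "card (E2 N d i j k) \<le> card ({-N..N} \<times> Wset (nat (2*N))) * card {-N..N} ^ (d - 3)"
      using card_E2[of i d j k N] that assms(1) unfolding K2_def by simp
    hence "real (card (E2 N d i j k)) \<le> real (card ({-N..N} \<times> Wset (nat (2*N))) * card {-N..N} ^ (d - 3))"
      by (simp only: of_nat_le_iff)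
    also have "\<dots> = P * real (card (Wset (nat (2*N)))) * (P ^ d / P ^ 3)"
      using cA pow_diff_real[OF P1 d3] by (simp add: card_cartesian_product)
    also have "\<dots> \<le> P * (6 * P * sqrt P) * (P ^ d / P ^ 3)"
      using Wb P1 by (intro mult_right_mono mult_left_mono) auto
    also have "\<dots> = 6 * X" unfolding X_def using P1 sP
      by (simp add: field_simps power3_eq_cube)
    finally show ?thesis .
  qed
  have b3: "real (card (E3 N d i j i' j')) \<le> 6 * X" if "(i,j,i',j') \<in> K3 d" for i j i' j'
  proof -
    have "card {i,j,i',j'} = 4" using that unfolding K3_def by auto
    moreover have "{i,j,i',j'} \<subseteq> {..<d}" using that unfolding K3_def by auto
    ultimately have d4: "4 \<le> d" by (metis card_lessThan card_mono finite_lessThan)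
    have "card (E3 N d i j i' j') \<le> card ({-N..N} \<times> Wset (nat (2*N)) \<times> {-N..N}) * card {-N..N} ^ (d - 4)"
      using card_E3[of i d j i' j' N] that assms(1) unfolding K3_def by simp
    hence "real (card (E3 N d i j i' j')) \<le> real (card ({-N..N} \<times> Wset (nat (2*N)) \<times> {-N..N}) * card {-N..N} ^ (d - 4))"
      by (simp only: of_nat_le_iff)
    also have "\<dots> = P * real (card (Wset (nat (2*N)))) * P * (P ^ d / P ^ 4)"
      using cA pow_diff_real[OF P1 d4] by (simp add: card_cartesian_product)
    also have "\<dots> \<le> P * (6 * P * sqrt P) * P * (P ^ d / P ^ 4)"
      using Wb P1 by (intro mult_right_mono mult_left_mono) auto
    also have "\<dots> = 6 * X" unfolding X_def using P1 sP
      by (simp add: field_simps power4_eq_xxxx)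
    finally show ?thesis .
  qed
  have "card (Bad N d L) \<le> card (\<Union>(k,l)\<in>K1 d L. E1 N d l) + card (\<Union>(i,j,k)\<in>K2 d. E2 N d i j k)
      + card (\<Union>(i,j,i',j')\<in>K3 d. E3 N d i j i' j')"
    unfolding Bad_def by (rule order_trans[OF card_Un_le add_right_mono[OF card_Un_le]])
  also have "\<dots> \<le> (\<Sum>(k,l)\<in>K1 d L. card (E1 N d l)) + (\<Sum>(i,j,k)\<in>K2 d. card (E2 N d i j k))
      + (\<Sum>(i,j,i',j')\<in>K3 d. card (E3 N d i j i' j'))"
    using card_UN_le[OF card_K1(2), of "\<lambda>(k,l). E1 N d l" d L]
      card_UN_le[OF card_K2(2), of "\<lambda>(i,j,k). E2 N d i j k" d]
      card_UN_le[OF card_K3(2), of "\<lambda>(i,j,i',j'). E3 N d i j i' j'" d]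
    by (intro add_mono) (simp_all add: split_def)
  finally have "real (card (Bad N d L)) \<le> real ((\<Sum>(k,l)\<in>K1 d L. card (E1 N d l)) + (\<Sum>(i,j,k)\<in>K2 d. card (E2 N d i j k))
      + (\<Sum>(i,j,i',j')\<in>K3 d. card (E3 N d i j i' j')))"
    by (simp only: of_nat_le_iff)
  also have "\<dots> = (\<Sum>(k,l)\<in>K1 d L. real (card (E1 N d l))) + (\<Sum>(i,j,k)\<in>K2 d. real (card (E2 N d i j k)))
      + (\<Sum>(i,j,i',j')\<in>K3 d. real (card (E3 N d i j i' j')))"
    by (simp add: of_nat_sum case_prod_unfold)
  also have "\<dots> \<le> real (card (K1 d L)) * X + real (card (K2 d)) * (6 * X) + real (card (K3 d)) * (6 * X)"
    by (intro add_mono sum_bounded_above) (use b1 b2 b3 in auto)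
  also have "\<dots> \<le> real (d * nat (2 * int L + 1) ^ d) * X + real (d^3) * (6 * X) + real (d^4) * (6 * X)"
    using X0 card_K1(1)[of d L] card_K2(1)[of d] card_K3(1)[of d]
    by (intro add_mono mult_right_mono) (auto simp del: of_nat_power of_nat_mult)
  also have "\<dots> = (real (d * nat (2 * int L + 1) ^ d) + 6 * d^3 + 6 * d^4) * X" by (simp add: algebra_simps)
  finally show ?thesis unfolding X_def .
qed



lemma Bset_finite: "R \<ge> 0 \<Longrightarrow> finite (Bset d R)"
  using Bset_eq[of R d] finite_LA[of "\<lfloor>R\<rfloor>" d] by simp

lemma Bset_lower:
  assumes "R \<ge> 0" "d \<ge> 1" "real d \<le> real_of_int (2 * \<lfloor>R\<rfloor> + 1)"
  shows "(real_of_int (2 * \<lfloor>R\<rfloor> + 1) / real d) ^ d \<le> real (card (Bset d R))"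
proof -
  define N where "N = \<lfloor>R\<rfloor>"
  have N0: "N \<ge> 0" unfolding N_def using assms by simp
  define A where "A = {-N..N}"
  have fA: "finite A" unfolding A_def by simp
  have cA: "card A = nat (2*N+1)" unfolding A_def using N0 by simp
  have sub: "sorted_list_of_set ` {S. S \<subseteq> A \<and> card S = d} \<subseteq> Bset d R"
  proof
    fix xs assume "xs \<in> sorted_list_of_set ` {S. S \<subseteq> A \<and> card S = d}"
    then obtain S where S: "S \<subseteq> A" "card S = d" "xs = sorted_list_of_set S" by auto
    have fS: "finite S" using finite_subset[OF S(1) fA] .
    show "xs \<in> Bset d R" unfolding Bset_eq[OF assms(1)] LA_def
      using S fS A_def N_def by (auto simp: strict_sorted_list_of_set)
  qed
  have inj: "inj_on sorted_list_of_set {S. S \<subseteq> A \<and> card S = d}"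
  proof (rule inj_onI)
    fix S T assume "S \<in> {S. S \<subseteq> A \<and> card S = d}" "T \<in> {S. S \<subseteq> A \<and> card S = d}"
      "sorted_list_of_set S = sorted_list_of_set T"
    thus "S = T" using fA by (metis (mono_tags, lifting) mem_Collect_eq rev_finite_subset set_sorted_list_of_set)
  qed
  have "card A choose d = card (sorted_list_of_set ` {S. S \<subseteq> A \<and> card S = d})"
    using n_subsets[OF fA, of d] card_image[OF inj] by simp
  also have "\<dots> \<le> card (Bset d R)" using sub Bset_finite[OF assms(1)] by (intro card_mono)
  finally have "real (card A choose d) \<le> real (card (Bset d R))" by simp
  moreover have "(real (card A) / real d) ^ d \<le> real (card A choose d)"
    using assms(3) cA N0 unfolding N_def by (intro binomial_ge_n_over_k_pow_k) (simp add: N_def)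
  moreover have "real (card A) = real_of_int (2 * \<lfloor>R\<rfloor> + 1)" using cA N0 unfolding N_def by simp
  ultimately show ?thesis by simp
qed



lemma P_facts:
  fixes R :: real
  assumes "R \<ge> 1"
  shows "R \<le> real_of_int (2 * \<lfloor>R\<rfloor> + 1)" "\<lfloor>R\<rfloor> \<ge> 0"
proof -
  have "real_of_int \<lfloor>R\<rfloor> > R - 1" by linarith
  thus "R \<le> real_of_int (2 * \<lfloor>R\<rfloor> + 1)" using assms by (simp; linarith)
  show "\<lfloor>R\<rfloor> \<ge> 0" using assms by simp
qed

lemma ratio_bounds:
  fixes d L :: nat and R :: real
  assumes d1: "d \<ge> 1" and R1: "R \<ge> 1" and Rd: "R \<ge> real d"
  defines "C \<equiv> real (d * nat (2 * int L + 1) ^ d) + 6 * d^3 + 6 * d^4"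
  shows "1 - C * real d ^ d / sqrt R \<le> real (card (Gset d L R)) / real (card (Bset d R))"
    and "real (card (Gset d L R)) / real (card (Bset d R)) \<le> 1"
    and "(real_of_int (2 * \<lfloor>R\<rfloor> + 1) / real d) ^ d \<le> real (card (Bset d R))"
proof -
  define N where "N = \<lfloor>R\<rfloor>"
  define P where "P = real_of_int (2 * N + 1)"
  have N0: "N \<ge> 0" and RP: "R \<le> P" using P_facts[OF R1] unfolding N_def P_def by auto
  have P1: "P \<ge> 1" using R1 RP by simp
  have R0: "R \<ge> 0" using R1 by simp
  have dP: "real d \<le> P" using Rd RP by simp
  have fB: "finite (Bset d R)" by (rule Bset_finite[OF R0])
  have GB: "Gset d L R \<subseteq> Bset d R" unfolding Gset_def by auto
  have Blow: "(P / real d) ^ d \<le> real (card (Bset d R))"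
    using Bset_lower[OF R0 d1] dP unfolding P_def N_def by simp
  thus "(real_of_int (2 * \<lfloor>R\<rfloor> + 1) / real d) ^ d \<le> real (card (Bset d R))" unfolding P_def N_def .
  have Bpos0: "(P / real d) ^ d > 0" using P1 d1 by simp
  have Bpos: "real (card (Bset d R)) > 0" using Blow Bpos0 by linarith
  show "real (card (Gset d L R)) / real (card (Bset d R)) \<le> 1"
    using Bpos card_mono[OF fB GB] by simp
  have diff_sub: "Bset d R - Gset d L R \<subseteq> Bad N d L"
    using bad_incl[OF R0] unfolding Gset_def N_def by auto
  have finBad: "finite (Bad N d L)"
    by (rule finite_subset[OF _ finite_LA[of N d]]) (auto simp: Bad_def E1_def E2_def E3_def)
  have "real (card (Bset d R - Gset d L R)) \<le> real (card (Bad N d L))"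
    using card_mono[OF finBad diff_sub] by simp
  also have "\<dots> \<le> C * (P ^ d / sqrt P)" unfolding C_def P_def by (rule bad_bound[OF N0 d1])
  finally have badle: "real (card (Bset d R - Gset d L R)) \<le> C * (P ^ d / sqrt P)" .
  have cardG: "real (card (Gset d L R)) = real (card (Bset d R)) - real (card (Bset d R - Gset d L R))"
    using card_Diff_subset[OF finite_subset[OF GB fB] GB] card_mono[OF fB GB] by simp
  have C0: "C \<ge> 0" unfolding C_def by simp
  have "real (card (Bset d R - Gset d L R)) / real (card (Bset d R)) \<le> (C * (P ^ d / sqrt P)) / (P / real d) ^ d"
    using C0 P1 Bpos0 badle Blow by (intro frac_le) auto
  also have "\<dots> = C * real d ^ d / sqrt P" using P1 d1 by (simp add: field_simps power_divide)
  also have "\<dots> \<le> C * real d ^ d / sqrt R" using R1 RP C0 by (intro divide_left_mono) auto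
  finally have q: "real (card (Bset d R - Gset d L R)) / real (card (Bset d R)) \<le> C * real d ^ d / sqrt R" .
  have "real (card (Gset d L R)) / real (card (Bset d R)) = 1 - real (card (Bset d R - Gset d L R)) / real (card (Bset d R))"
    using Bpos unfolding cardG by (simp add: field_simps)
  thus "1 - C * real d ^ d / sqrt R \<le> real (card (Gset d L R)) / real (card (Bset d R))" using q by simp
qed

lemma inv_sqrt_lim: "((\<lambda>R::real. c / sqrt R) \<longlongrightarrow> 0) at_top"
proof -
  have "((\<lambda>R::real. 1 / sqrt R) \<longlongrightarrow> 0) at_top" by real_asymp
  hence "((\<lambda>R::real. c * (1 / sqrt R)) \<longlongrightarrow> c * 0) at_top" by (intro tendsto_mult tendsto_const)
  thus ?thesis by simp
qed

lemma inv_lim: "((\<lambda>R::real. c / R) \<longlongrightarrow> 0) at_top"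
proof -
  have "((\<lambda>R::real. 1 / R) \<longlongrightarrow> 0) at_top" by real_asymp
  hence "((\<lambda>R::real. c * (1 / R)) \<longlongrightarrow> c * 0) at_top" by (intro tendsto_mult tendsto_const)
  thus ?thesis by simp
qed

theorem lemma2p5:
  fixes d L :: nat
  assumes "d \<ge> 1"
  shows "infinite {ms :: int list. length ms = d \<and> sorted_wrt (<) ms \<and> L_generic L ms}
    \<and> ((\<lambda>R. real (card (Gset d L R)) / real (card (Bset d R))) \<longlongrightarrow> 1) at_top"
proof -
  define C where "C = real (d * nat (2 * int L + 1) ^ d) + 6 * d^3 + 6 * d^4"
  define F where "F = (\<lambda>R. real (card (Gset d L R)) / real (card (Bset d R)))"
  have ev: "eventually (\<lambda>R. R \<ge> max 1 (real d)) at_top" by (rule eventually_ge_at_top)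
  have lim: "(F \<longlongrightarrow> 1) at_top"
  proof (rule tendsto_sandwich[where f="\<lambda>R. 1 - C * real d ^ d / sqrt R" and g=F and h="\<lambda>_. 1"])
    show "eventually (\<lambda>R. 1 - C * real d ^ d / sqrt R \<le> F R) at_top"
      using ev by eventually_elim (use ratio_bounds(1)[OF assms] in \<open>auto simp: F_def C_def\<close>)
    show "eventually (\<lambda>R. F R \<le> 1) at_top"
      using ev by eventually_elim (use ratio_bounds(2)[OF assms] in \<open>auto simp: F_def\<close>)
    have "((\<lambda>R. 1 - C * real d ^ d / sqrt R) \<longlongrightarrow> 1 - 0) at_top"
      by (intro tendsto_diff tendsto_const inv_sqrt_lim)
    thus "((\<lambda>R. 1 - C * real d ^ d / sqrt R) \<longlongrightarrow> 1) at_top" by simp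
  qed simp
  have inf: "infinite {ms :: int list. length ms = d \<and> sorted_wrt (<) ms \<and> L_generic L ms}"
  proof
    define S where "S = {ms :: int list. length ms = d \<and> sorted_wrt (<) ms \<and> L_generic L ms}"
    assume fin: "finite {ms :: int list. length ms = d \<and> sorted_wrt (<) ms \<and> L_generic L ms}"
    hence fS: "finite S" unfolding S_def .
    have lim0: "(F \<longlongrightarrow> 0) at_top"
    proof (rule tendsto_sandwich[where f="\<lambda>_. 0" and g=F and h="\<lambda>R. real (card S) * real d ^ d / R"])
      show "eventually (\<lambda>R. 0 \<le> F R) at_top" by (simp add: F_def)
      show "eventually (\<lambda>R. F R \<le> real (card S) * real d ^ d / R) at_top"
        using ev
      proof eventually_elim
        case (elim R)
        hence R1: "R \<ge> 1" and Rd: "R \<ge> real d" by auto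
        define P where "P = real_of_int (2 * \<lfloor>R\<rfloor> + 1)"
        have RP: "R \<le> P" using P_facts[OF R1] unfolding P_def by auto
        have P1: "P \<ge> 1" using R1 RP by simp
        have Blow: "(P / real d) ^ d \<le> real (card (Bset d R))"
          using ratio_bounds(3)[OF assms R1 Rd] unfolding P_def .
        have Bpos0: "(P / real d) ^ d > 0" using P1 assms by simp
        have GS: "Gset d L R \<subseteq> S" unfolding Gset_def Bset_def S_def by auto
        have cG: "real (card (Gset d L R)) \<le> real (card S)" using card_mono[OF fS GS] by simp
        have "F R \<le> real (card S) / (P / real d) ^ d"
          unfolding F_def using cG Blow Bpos0 by (intro frac_le) auto
        also have "\<dots> = real (card S) * real d ^ d / P ^ d" using P1 assms by (simp add: power_divide)
        also have "\<dots> \<le> real (card S) * real d ^ d / R"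
        proof (intro divide_left_mono)
          have "P ^ 1 \<le> P ^ d" using P1 assms by (intro power_increasing) auto
          thus "R \<le> P ^ d" using RP by simp
        qed (use R1 P1 in auto)
        finally show ?case .
      qed
      show "((\<lambda>R. real (card S) * real d ^ d / R) \<longlongrightarrow> 0) at_top" by (rule inv_lim)
    qed simp
    have "(1::real) = 0" using tendsto_unique[OF _ lim lim0] by simp
    thus False by simp
  qed
  show ?thesis using inf lim unfolding F_def by simp
qed

end
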